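(* Let $\mathcal{P}$ be a finite nonempty set and $\mathcal{N}$ a finite set of stochastic trees. If there exists an LPTS with $k$ states that is consistent with $\mathcal{P}$ and $\mathcal{N}$, then there is a consistent partition of $S_\mathcal{P}$ with at most $2^k$ classes.
   Context: An LPTS is a tuple $\langle S,s^0,\alpha,\tau\rangle$ with finite state set $S$, start state $s^0$, finite action set $\alpha$, finite $\tau\subseteq S\times\alpha\times\mathrm{Dist}(S)$, where $\mathrm{Dist}(S)$ is the set of discrete probability distributions over $S$ (rational probabilities); write $s\xrightarrow{a}\mu$. A stochastic tree is an LPTS whose start state is in the support of no transition's distribution and every other state is in the support of exactly one transition's distribution. Strong simulation: for $\mu_1\in\mathrm{Dist}(S_1)$, $\mu_2\in\mathrm{Dist}(S_2)$, $R\subseteq S_1\times S_2$, $\mu_1\sqsubseteq_R\mu_2$ iff there is $w:S_1\times S_2\to\mathbb{Q}\cap[0,1]$ with $\sum_{s_2}w(s_1,s_2)=\mu_1(s_1)$, $\sum_{s_1}w(s_1,s_2)=\mu_2(s_2)$ and $w(s_1,s_2)>0\Rightarrow s_1Rs_2$; $R$ is a strong simulation iff $s_1Rs_2$ and $s_1\xrightarrow{a}\mu_1$ imply some $s_2\xrightarrow{a}\mu_2$ with $\mu_1\sqsubseteq_R\mu_2$; $L_1\preceq L_2$ iff a strong simulation relates the start states. An LPTS $L$ is consistent with $\mathcal{P},\mathcal{N}$ iff $P\preceq L$ for all $P\in\mathcal{P}$ and $N\not\preceq L$ for all $N\in\mathcal{N}$. $S_\mathcal{P}$ is the (disjoint)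 union of the state sets of the trees in $\mathcal{P}$. For a partition $\Pi$ of $S_\mathcal{P}$ with classes $E_\Pi$ and class $[s]$ of $s$, in which all start states of trees in $\mathcal{P}$ lie in one class, the quotient $\mathcal{P}/\Pi$ is the LPTS with states $E_\Pi$, start state that common class, actions $\bigcup_{P\in\mathcal{P}}\alpha_P$, and a transition $e\xrightarrow{a}\mu$ iff some $P\in\mathcal{P}$ has $s\xrightarrow{a}\mu_p$ with $[s]=e$ and $\mu(e')=\sum_{s'\in e'}\mu_p(s')$ for all $e'$. Such a partition $\Pi$ is consistent iff $N\not\preceq\mathcal{P}/\Pi$ for every $N\in\mathcal{N}$; its size is the number of classes. *)

theory Defs
  imports Complex_Main "HOL-Library.Disjoint_Sets"
begin

record ('s, 'a) lpts =
  states :: "'s set"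
  start  :: 's
  acts   :: "'a set"
  trans  :: "('s \<times> 'a \<times> ('s \<Rightarrow> rat)) set"

definition Dist :: "'s set \<Rightarrow> ('s \<Rightarrow> rat) set" where
  "Dist S = {\<mu>. (\<forall>s. 0 \<le> \<mu> s) \<and> (\<forall>s. s \<notin> S \<longrightarrow> \<mu> s = 0) \<and> sum \<mu> S = 1}"

definition is_lpts :: "('s, 'a) lpts \<Rightarrow> bool" where
  "is_lpts L \<longleftrightarrow> finite (states L) \<and> start L \<in> states L \<and> finite (acts L)
     \<and> finite (trans L)
     \<and> trans L \<subseteq> states L \<times> acts L \<times> Dist (states L)"

definition is_stochastic_tree :: "('s, 'a) lpts \<Rightarrow> bool" where
  "is_stochastic_tree L \<longleftrightarrow> is_lpts L
     \<and> (\<forall>(s, a, \<mu>) \<in> trans L. \<mu> (start L) = 0)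
     \<and> (\<forall>t \<in> states L - {start L}. \<exists>!tr. tr \<in> trans L \<and> (snd (snd tr)) t > 0)"

definition lift_rel ::
  "('s1 \<times> 's2) set \<Rightarrow> 's1 set \<Rightarrow> 's2 set \<Rightarrow> ('s1 \<Rightarrow> rat) \<Rightarrow> ('s2 \<Rightarrow> rat) \<Rightarrow> bool" where
  "lift_rel R S1 S2 \<mu>1 \<mu>2 \<longleftrightarrow> (\<exists>w :: 's1 \<Rightarrow> 's2 \<Rightarrow> rat.
      (\<forall>x y. 0 \<le> w x y \<and> w x y \<le> 1)
    \<and> (\<forall>s1 \<in> S1. (\<Sum>s2 \<in> S2. w s1 s2) = \<mu>1 s1)
    \<and> (\<forall>s2 \<in> S2. (\<Sum>s1 \<in> S1. w s1 s2) = \<mu>2 s2)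
    \<and> (\<forall>x y. w x y > 0 \<longrightarrow> (x, y) \<in> R))"

definition strong_simulation :: "('s1 \<times> 's2) set \<Rightarrow> ('s1, 'a) lpts \<Rightarrow> ('s2, 'a) lpts \<Rightarrow> bool" where
  "strong_simulation R L1 L2 \<longleftrightarrow> R \<subseteq> states L1 \<times> states L2
     \<and> (\<forall>s1 s2 a \<mu>1. (s1, s2) \<in> R \<and> (s1, a, \<mu>1) \<in> trans L1 \<longrightarrow>
           (\<exists>\<mu>2. (s2, a, \<mu>2) \<in> trans L2 \<and> lift_rel R (states L1) (states L2) \<mu>1 \<mu>2))"

definition simulated_by :: "('s1, 'a) lpts \<Rightarrow> ('s2, 'a) lpts \<Rightarrow> bool" (infix "\<preceq>\<^sub>s" 50) where
  "L1 \<preceq>\<^sub>s L2 \<longleftrightarrow> (\<exists>R. strong_simulation R L1 L2 \<and> (start L1, start L2) \<in> R)"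

definition consistent :: "('p, 'a) lpts set \<Rightarrow> ('n, 'a) lpts set \<Rightarrow> ('s, 'a) lpts \<Rightarrow> bool" where
  "consistent \<P> \<N> L \<longleftrightarrow> (\<forall>P \<in> \<P>. P \<preceq>\<^sub>s L) \<and> (\<forall>N \<in> \<N>. \<not> N \<preceq>\<^sub>s L)"

text \<open>Disjoint union of the state sets of the trees in \<P>: a state is tagged with its tree.\<close>
definition S_P :: "('s, 'a) lpts set \<Rightarrow> (('s, 'a) lpts \<times> 's) set" where
  "S_P \<P> = {(P, s). P \<in> \<P> \<and> s \<in> states P}"

definition starts_in_one_class ::
  "('s, 'a) lpts set \<Rightarrow> (('s, 'a) lpts \<times> 's) set set \<Rightarrow> bool" where
  "starts_in_one_class \<P> Q \<longleftrightarrow> (\<exists>e \<in> Q. \<forall>P \<in> \<P>. (P, start P) \<in> e)"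

definition quotient ::
  "('s, 'a) lpts set \<Rightarrow> (('s, 'a) lpts \<times> 's) set set \<Rightarrow> ((('s, 'a) lpts \<times> 's) set, 'a) lpts" where
  "quotient \<P> Q = \<lparr>
     states = Q,
     start = (THE e. e \<in> Q \<and> (\<forall>P \<in> \<P>. (P, start P) \<in> e)),
     acts = (\<Union>P \<in> \<P>. acts P),
     trans = {(e, a, \<mu>) | e a \<mu>. \<exists>P \<in> \<P>. \<exists>s \<mu>p.
                 (s, a, \<mu>p) \<in> trans P \<and> e \<in> Q \<and> (P, s) \<in> e
               \<and> \<mu> = (\<lambda>e'. if e' \<in> Q then (\<Sum>s' \<in> {s' \<in> states P. (P, s') \<in> e'}. \<mu>p s') else 0)} \<rparr>"

definition consistent_partition ::
  "('s, 'a) lpts set \<Rightarrow> ('n, 'a) lpts set \<Rightarrow> (('s, 'a) lpts \<times> 's) set set \<Rightarrow> bool" where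
  "consistent_partition \<P> \<N> Q \<longleftrightarrow> partition_on (S_P \<P>) Q \<and> starts_in_one_class \<P> Q
     \<and> (\<forall>N \<in> \<N>. \<not> N \<preceq>\<^sub>s quotient \<P> Q)"

end

theory Submission
  imports Defs
begin

lemma dist_le1:
  assumes "\<mu> \<in> Dist S" "finite S"
  shows "\<mu> x \<le> 1"
proof (cases "x \<in> S")
  case True
  have "\<mu> x \<le> sum \<mu> S" using assms True by (intro member_le_sum) (auto simp: Dist_def)
  thus ?thesis using assms by (simp add: Dist_def)
next
  case False thus ?thesis using assms by (simp add: Dist_def)
qed

lemma lift_rel_comp:
  assumes fin: "finite SA" "finite SB" "finite SC"
    and l1: "lift_rel R1 SA SB \<mu>1 \<mu>2" and l2: "lift_rel R2 SB SC \<mu>2 \<mu>3"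
    and b1: "\<And>x. \<mu>1 x \<le> 1"
  shows "lift_rel (R1 O R2) SA SC \<mu>1 \<mu>3"
proof -
  obtain w1 where w1: "\<forall>x y. 0 \<le> w1 x y \<and> w1 x y \<le> 1"
    "\<forall>s1 \<in> SA. (\<Sum>s2 \<in> SB. w1 s1 s2) = \<mu>1 s1"
    "\<forall>s2 \<in> SB. (\<Sum>s1 \<in> SA. w1 s1 s2) = \<mu>2 s2"
    "\<forall>x y. w1 x y > 0 \<longrightarrow> (x, y) \<in> R1" using l1 unfolding lift_rel_def by blast
  obtain w2 where w2: "\<forall>x y. 0 \<le> w2 x y \<and> w2 x y \<le> 1"
    "\<forall>s1 \<in> SB. (\<Sum>s2 \<in> SC. w2 s1 s2) = \<mu>2 s1"
    "\<forall>s2 \<in> SC. (\<Sum>s1 \<in> SB. w2 s1 s2) = \<mu>3 s2"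
    "\<forall>x y. w2 x y > 0 \<longrightarrow> (x, y) \<in> R2" using l2 unfolding lift_rel_def by blast
  define w where "w x z = (if x \<in> SA \<and> z \<in> SC then (\<Sum>y\<in>SB. w1 x y * w2 y z / \<mu>2 y) else 0)" for x z
  have z1: "w1 x y = 0" if "x \<in> SA" "y \<in> SB" "\<mu>2 y = 0" for x y
  proof -
    have "(\<Sum>x\<in>SA. w1 x y) = 0" using w1(3) that by simp
    moreover have "\<forall>x\<in>SA. 0 \<le> w1 x y" using w1(1) by simp
    ultimately have "\<forall>x\<in>SA. w1 x y = 0" using sum_nonneg_eq_0_iff[OF fin(1), of "\<lambda>x. w1 x y"] by simp
    thus ?thesis using that by blast
  qed
  have z2: "w2 y z = 0" if "z \<in> SC" "y \<in> SB" "\<mu>2 y = 0" for y z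
  proof -
    have "(\<Sum>z\<in>SC. w2 y z) = 0" using w2(2) that by simp
    moreover have "\<forall>z\<in>SC. 0 \<le> w2 y z" using w2(1) by simp
    ultimately have "\<forall>z\<in>SC. w2 y z = 0" using sum_nonneg_eq_0_iff[OF fin(3), of "\<lambda>z. w2 y z"] by simp
    thus ?thesis using that by blast
  qed
  have mu2nn: "\<mu>2 y \<ge> 0" if "y \<in> SB" for y
    using w1(3) that by (metis sum_nonneg w1(1))
  have wnn: "0 \<le> w x z" for x z
    unfolding w_def using w1(1) w2(1) mu2nn by (auto intro!: sum_nonneg divide_nonneg_nonneg)
  have m1: "(\<Sum>z\<in>SC. w x z) = \<mu>1 x" if "x \<in> SA" for x
  proof -
    have "(\<Sum>z\<in>SC. w x z) = (\<Sum>y\<in>SB. \<Sum>z\<in>SC. w1 x y * w2 y z / \<mu>2 y)"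
      using that unfolding w_def by (simp add: sum.swap[of _ SC])
    also have "\<dots> = (\<Sum>y\<in>SB. w1 x y * (\<Sum>z\<in>SC. w2 y z) / \<mu>2 y)"
      by (simp add: sum_divide_distrib sum_distrib_left)
    also have "\<dots> = (\<Sum>y\<in>SB. w1 x y)"
      using w2(2) z1[OF that] by (intro sum.cong) auto
    finally show ?thesis using w1(2) that by simp
  qed
  have m2: "(\<Sum>x\<in>SA. w x z) = \<mu>3 z" if "z \<in> SC" for z
  proof -
    have "(\<Sum>x\<in>SA. w x z) = (\<Sum>y\<in>SB. \<Sum>x\<in>SA. w1 x y * w2 y z / \<mu>2 y)"
      using that unfolding w_def by (simp add: sum.swap[of _ SA])
    also have "\<dots> = (\<Sum>y\<in>SB. (\<Sum>x\<in>SA. w1 x y) * w2 y z / \<mu>2 y)"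
      by (simp add: sum_divide_distrib sum_distrib_right)
    also have "\<dots> = (\<Sum>y\<in>SB. w2 y z)"
      using w1(3) z2[OF that] by (intro sum.cong) auto
    finally show ?thesis using w2(3) that by simp
  qed
  have wle: "w x z \<le> 1" for x z
  proof (cases "x \<in> SA \<and> z \<in> SC")
    case True
    have "w x z \<le> (\<Sum>z\<in>SC. w x z)" using True fin wnn by (intro member_le_sum) auto
    also have "\<dots> = \<mu>1 x" using m1 True by simp
    finally show ?thesis using b1[of x] by simp
  qed (auto simp add: w_def)
  have pos: "(x, z) \<in> R1 O R2" if "w x z > 0" for x z
  proof -
    have in1: "x \<in> SA" "z \<in> SC" using that unfolding w_def by (auto split: if_splits)
    have "\<not> (\<forall>y\<in>SB. w1 x y * w2 y z / \<mu>2 y \<le> 0)"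
      using that in1 sum_nonpos[of SB "\<lambda>y. w1 x y * w2 y z / \<mu>2 y"] unfolding w_def by auto
    then obtain y where y: "y \<in> SB" "w1 x y * w2 y z / \<mu>2 y > 0" by auto
    have "w1 x y \<noteq> 0" "w2 y z \<noteq> 0" using y by auto
    hence "w1 x y > 0" "w2 y z > 0" using w1(1) w2(1) by (auto simp: order_le_less)
    thus ?thesis using w1(4) w2(4) by blast
  qed
  show ?thesis unfolding lift_rel_def
    by (rule exI[of _ w]) (use wnn wle m1 m2 pos in auto)
qed


lemma ssD1: "strong_simulation R L1 L2 \<Longrightarrow> R \<subseteq> states L1 \<times> states L2"
  by (simp add: strong_simulation_def)

lemma ssD2: "strong_simulation R L1 L2 \<Longrightarrow> (s1, s2) \<in> R \<Longrightarrow> (s1, a, \<mu>1) \<in> trans L1 \<Longrightarrow>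
  \<exists>\<mu>2. (s2, a, \<mu>2) \<in> trans L2 \<and> lift_rel R (states L1) (states L2) \<mu>1 \<mu>2"
  unfolding strong_simulation_def by blast

lemma sim_comp:
  assumes s1: "strong_simulation R1 A B" and s2: "strong_simulation R2 B C"
    and A: "is_lpts A" and fB: "finite (states B)" and fC: "finite (states C)"
  shows "strong_simulation (R1 O R2) A C"
  unfolding strong_simulation_def
proof (intro conjI allI impI)
  show "R1 O R2 \<subseteq> states A \<times> states C" using ssD1[OF s1] ssD1[OF s2] by blast
next
  fix x z a \<mu>1
  assume h: "(x, z) \<in> R1 O R2 \<and> (x, a, \<mu>1) \<in> trans A"
  then obtain y where xy: "(x, y) \<in> R1" and yz: "(y, z) \<in> R2" by blast
  obtain \<mu>2 where m2: "(y, a, \<mu>2) \<in> trans B" "lift_rel R1 (states A) (states B) \<mu>1 \<mu>2"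
    using ssD2[OF s1 xy] h by blast
  obtain \<mu>3 where m3: "(z, a, \<mu>3) \<in> trans C" "lift_rel R2 (states B) (states C) \<mu>2 \<mu>3"
    using ssD2[OF s2 yz m2(1)] by blast
  have fA: "finite (states A)" using A by (simp add: is_lpts_def)
  have "trans A \<subseteq> states A \<times> UNIV \<times> Dist (states A)" using A by (auto simp: is_lpts_def)
  hence D: "\<mu>1 \<in> Dist (states A)" using h by blast
  have b: "\<mu>1 x' \<le> 1" for x' using D fA by (rule dist_le1)
  show "\<exists>\<mu>3. (z, a, \<mu>3) \<in> trans C \<and> lift_rel (R1 O R2) (states A) (states C) \<mu>1 \<mu>3"
    using m3 lift_rel_comp[OF fA fB fC m2(2) m3(2) b] by blast
qed

lemma sim_trans:
  assumes "A \<preceq>\<^sub>s B" "B \<preceq>\<^sub>s C" "is_lpts A" "finite (states B)" "finite (states C)"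
  shows "A \<preceq>\<^sub>s C"
proof -
  obtain R1 where r1: "strong_simulation R1 A B" "(start A, start B) \<in> R1"
    using assms(1) unfolding simulated_by_def by blast
  obtain R2 where r2: "strong_simulation R2 B C" "(start B, start C) \<in> R2"
    using assms(2) unfolding simulated_by_def by blast
  have "strong_simulation (R1 O R2) A C" using sim_comp[OF r1(1) r2(1) assms(3-5)] .
  moreover have "(start A, start C) \<in> R1 O R2" using r1(2) r2(2) by blast
  ultimately show ?thesis unfolding simulated_by_def by blast
qed


theorem corollary1:
  fixes \<P> :: "('s, 'a) lpts set" and \<N> :: "('n, 'a) lpts set"
    and L :: "('c, 'a) lpts" and k :: nat
  assumes "finite \<P>" and "\<P> \<noteq> {}" and "finite \<N>"
    and "\<forall>P \<in> \<P>. is_stochastic_tree P"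
    and "\<forall>N \<in> \<N>. is_stochastic_tree N"
    and "is_lpts L" and "card (states L) = k"
    and "consistent \<P> \<N> L"
  shows "\<exists>Q. consistent_partition \<P> \<N> Q \<and> card Q \<le> 2 ^ k"
proof -
  note PT = assms(4) and NT = assms(5) and LL = assms(6)
  have finL: "finite (states L)" using LL by (simp add: is_lpts_def)
  have Plpts: "is_lpts P" if "P \<in> \<P>" for P using PT that by (simp add: is_stochastic_tree_def)
  have Nlpts: "is_lpts N" if "N \<in> \<N>" for N using NT that by (simp add: is_stochastic_tree_def)
  have PsimL: "P \<preceq>\<^sub>s L" if "P \<in> \<P>" for P using assms(8) that by (simp add: consistent_def)
  have NnsimL: "\<not> N \<preceq>\<^sub>s L" if "N \<in> \<N>" for N using assms(8) that by (simp add: consistent_def)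
  define sim where "sim x l \<longleftrightarrow> (\<exists>R. strong_simulation R (fst x) L \<and> (snd x, l) \<in> R)"
    for x :: "('s, 'a) lpts \<times> 's" and l
  define F where "F x = {l \<in> states L. sim x l}" for x
  define V0 where "V0 = (\<Inter>P\<in>\<P>. F (P, start P))"
  define key where "key x = (if snd x = start (fst x) then V0 else F x)" for x
  define SP where "SP = S_P \<P>"
  define cls where "cls x = {y \<in> SP. key y = key x}" for x
  define Q where "Q = cls ` SP"
  have SP_iff: "(P, s) \<in> SP \<longleftrightarrow> P \<in> \<P> \<and> s \<in> states P" for P s
    by (simp add: SP_def S_P_def)
  have cls_mem: "x \<in> cls x" if "x \<in> SP" for x using that by (simp add: cls_def)
  have cls_eq: "e = cls x" if eQ: "e \<in> Q" and xe: "x \<in> e" for e x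
  proof -
    obtain y where y: "y \<in> SP" "e = cls y" using eQ unfolding Q_def by blast
    thus ?thesis using xe by (auto simp: cls_def)
  qed
  have filt: "{e \<in> Q. x \<in> e} = {cls x}" if xSP: "x \<in> SP" for x
  proof (intro equalityI subsetI)
    fix e assume "e \<in> {e \<in> Q. x \<in> e}"
    hence "e = cls x" using cls_eq by simp
    thus "e \<in> {cls x}" by simp
  next
    fix e assume "e \<in> {cls x}"
    hence "e = cls x" by simp
    moreover have "cls x \<in> Q" using xSP by (simp add: Q_def)
    ultimately show "e \<in> {e \<in> Q. x \<in> e}" using cls_mem[OF xSP] by simp
  qed
  have FsubL: "F x \<subseteq> states L" for x by (auto simp: F_def)
  have V0sub: "V0 \<subseteq> states L"
  proof -
    obtain P0 where "P0 \<in> \<P>" using assms(2) by blast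
    thus ?thesis using FsubL unfolding V0_def by blast
  qed
  have keysub: "key ` SP \<subseteq> Pow (states L)" using FsubL V0sub by (auto simp: key_def)
  have finK: "finite (key ` SP)" using keysub finL by (meson finite_Pow_iff finite_subset)
  have Q_alt: "Q = (\<lambda>V. {y \<in> SP. key y = V}) ` (key ` SP)" by (auto simp: Q_def cls_def)
  have finQ: "finite Q" using finK Q_alt by simp
  have cardQ: "card Q \<le> 2 ^ k"
  proof -
    have "card Q \<le> card (key ` SP)" unfolding Q_alt using finK by (rule card_image_le)
    also have "\<dots> \<le> card (Pow (states L))" using keysub finL by (intro card_mono) auto
    also have "\<dots> = 2 ^ k" using finL assms(7) by (simp add: card_Pow)
    finally show ?thesis .
  qed
  have part: "partition_on (S_P \<P>) Q"
    unfolding partition_on_def disjoint_def SP_def[symmetric]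
  proof (intro conjI ballI impI)
    show "\<Union> Q = SP" using cls_mem by (auto simp: Q_def cls_def)
    show "{} \<notin> Q" using cls_mem by (auto simp: Q_def)
  next
    fix e1 e2 assume "e1 \<in> Q" "e2 \<in> Q" "e1 \<noteq> e2"
    show "e1 \<inter> e2 = {}"
    proof (rule ccontr)
      assume "e1 \<inter> e2 \<noteq> {}"
      then obtain x where "x \<in> e1" "x \<in> e2" by blast
      hence "e1 = cls x" "e2 = cls x" using cls_eq[OF \<open>e1 \<in> Q\<close>] cls_eq[OF \<open>e2 \<in> Q\<close>] by blast+
      thus False using \<open>e1 \<noteq> e2\<close> by simp
    qed
  qed
  obtain P0 where P0: "P0 \<in> \<P>" using assms(2) by blast
  define e0 where "e0 = cls (P0, start P0)"
  have startP: "start P \<in> states P" if "P \<in> \<P>" for P using Plpts[OF that] by (simp add: is_lpts_def)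
  have P0SP: "(P0, start P0) \<in> SP" using SP_iff P0 startP by blast
  have e0Q: "e0 \<in> Q" using P0SP by (simp add: Q_def e0_def)
  have starts_e0: "(P, start P) \<in> e0" if "P \<in> \<P>" for P
    using that startP SP_iff by (simp add: e0_def cls_def key_def)
  have sio: "starts_in_one_class \<P> Q" unfolding starts_in_one_class_def using e0Q starts_e0 by blast
  let ?Qt = "quotient \<P> Q"
  have stQ: "states ?Qt = Q" by (simp add: quotient_def)
  have startQ: "start ?Qt = e0"
  proof -
    have "(THE e. e \<in> Q \<and> (\<forall>P \<in> \<P>. (P, start P) \<in> e)) = e0"
    proof (rule the_equality)
      show "e0 \<in> Q \<and> (\<forall>P\<in>\<P>. (P, start P) \<in> e0)" using e0Q starts_e0 by blast
    next
      fix e assume "e \<in> Q \<and> (\<forall>P\<in>\<P>. (P, start P) \<in> e)"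
      hence "e \<in> Q" "(P0, start P0) \<in> e" using P0 by auto
      hence "e = cls (P0, start P0)" by (rule cls_eq)
      thus "e = e0" by (simp add: e0_def)
    qed
    thus ?thesis by (simp add: quotient_def)
  qed
  define R2 where "R2 = {(e, l). e \<in> Q \<and> l \<in> states L \<and> (\<forall>x\<in>e. sim x l)}"
  have simtr: "strong_simulation R2 ?Qt L"
    unfolding strong_simulation_def
  proof (intro conjI allI impI)
    show "R2 \<subseteq> states ?Qt \<times> states L" by (auto simp: R2_def stQ)
  next
    fix e l a \<mu>
    assume h: "(e, l) \<in> R2 \<and> (e, a, \<mu>) \<in> trans ?Qt"
    hence eR: "e \<in> Q" "l \<in> states L" "\<forall>x\<in>e. sim x l" by (auto simp: R2_def)
    from h have "(e, a, \<mu>) \<in> trans ?Qt" by simp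
    hence "\<exists>P\<in>\<P>. \<exists>s \<mu>p. (s, a, \<mu>p) \<in> trans P \<and> e \<in> Q \<and> (P, s) \<in> e
               \<and> \<mu> = (\<lambda>e'. if e' \<in> Q then (\<Sum>s' \<in> {s' \<in> states P. (P, s') \<in> e'}. \<mu>p s') else 0)"
      by (simp add: quotient_def)
    then obtain P s \<mu>p where P: "P \<in> \<P>" "(s, a, \<mu>p) \<in> trans P" "(P, s) \<in> e"
      and \<mu>: "\<mu> = (\<lambda>e'. if e' \<in> Q then (\<Sum>s' \<in> {s' \<in> states P. (P, s') \<in> e'}. \<mu>p s') else 0)"
      by blast
    have "sim (P, s) l" using eR(3) P(3) by blast
    then obtain R where R: "strong_simulation R P L" "(s, l) \<in> R" by (auto simp: sim_def)
    obtain \<mu>2 where m2: "(l, a, \<mu>2) \<in> trans L" "lift_rel R (states P) (states L) \<mu>p \<mu>2"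
      using ssD2[OF R(1) R(2) P(2)] by blast
    obtain w where w: "\<forall>x y. 0 \<le> w x y \<and> w x y \<le> 1"
      "\<forall>s1 \<in> states P. (\<Sum>s2 \<in> states L. w s1 s2) = \<mu>p s1"
      "\<forall>s2 \<in> states L. (\<Sum>s1 \<in> states P. w s1 s2) = \<mu>2 s2"
      "\<forall>x y. w x y > 0 \<longrightarrow> (x, y) \<in> R" using m2(2) unfolding lift_rel_def by blast
    have finP: "finite (states P)" using Plpts[OF P(1)] by (simp add: is_lpts_def)
    have "trans L \<subseteq> states L \<times> acts L \<times> Dist (states L)" using LL by (simp add: is_lpts_def)
    hence \<mu>2D: "\<mu>2 \<in> Dist (states L)" using m2(1) by blast
    have \<mu>2le: "\<mu>2 l' \<le> 1" for l' using \<mu>2D finL by (rule dist_le1)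
    define S where "S e' = {s' \<in> states P. (P, s') \<in> e'}" for e'
    have SsubP: "S e' \<subseteq> states P" for e' by (auto simp: S_def)
    define w' where "w' e' l' = (if e' \<in> Q \<and> l' \<in> states L then (\<Sum>s'\<in>S e'. w s' l') else 0)" for e' l'
    have wnn: "0 \<le> w' e' l'" for e' l' unfolding w'_def using w(1) by (auto intro!: sum_nonneg)
    have wle: "w' e' l' \<le> 1" for e' l'
    proof (cases "e' \<in> Q \<and> l' \<in> states L")
      case True
      have "(\<Sum>s'\<in>S e'. w s' l') \<le> (\<Sum>s'\<in>states P. w s' l')"
        using finP SsubP w(1) by (intro sum_mono2) auto
      also have "\<dots> = \<mu>2 l'" using w(3) True by simp
      finally show ?thesis using \<mu>2le[of l'] True by (simp add: w'_def)
    qed (auto simp add: w'_def)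
    have mm1: "(\<Sum>l'\<in>states L. w' e' l') = \<mu> e'" if e'Q: "e' \<in> Q" for e'
    proof -
      have "(\<Sum>l'\<in>states L. w' e' l') = (\<Sum>l'\<in>states L. \<Sum>s'\<in>S e'. w s' l')"
        using e'Q by (simp add: w'_def)
      also have "\<dots> = (\<Sum>s'\<in>S e'. \<Sum>l'\<in>states L. w s' l')" by (rule sum.swap)
      also have "\<dots> = (\<Sum>s'\<in>S e'. \<mu>p s')" using w(2) SsubP by (intro sum.cong) auto
      finally show ?thesis using e'Q by (simp add: \<mu> S_def)
    qed
    have mm2: "(\<Sum>e'\<in>Q. w' e' l') = \<mu>2 l'" if l'L: "l' \<in> states L" for l'
    proof -
      have "(\<Sum>e'\<in>Q. w' e' l') = (\<Sum>e'\<in>Q. \<Sum>s'\<in>states P. if (P, s') \<in> e' then w s' l' else 0)"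
        using l'L finP by (intro sum.cong) (auto simp: w'_def S_def sum.inter_filter)
      also have "\<dots> = (\<Sum>s'\<in>states P. \<Sum>e'\<in>Q. if (P, s') \<in> e' then w s' l' else 0)"
        by (rule sum.swap)
      also have "\<dots> = (\<Sum>s'\<in>states P. w s' l')"
      proof (intro sum.cong refl)
        fix s' assume s'P: "s' \<in> states P"
        hence xSP: "(P, s') \<in> SP" using SP_iff P(1) by blast
        have "(\<Sum>e'\<in>Q. if (P, s') \<in> e' then w s' l' else 0) = (\<Sum>e'\<in>{e' \<in> Q. (P, s') \<in> e'}. w s' l')"
          by (rule sum.inter_filter[OF finQ, symmetric])
        also have "\<dots> = w s' l'" using filt[OF xSP] by simp
        finally show "(\<Sum>e'\<in>Q. if (P, s') \<in> e' then w s' l' else 0) = w s' l'" .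
      qed
      also have "\<dots> = \<mu>2 l'" using w(3) l'L by simp
      finally show ?thesis .
    qed
    have pos: "(e', l') \<in> R2" if wp: "w' e' l' > 0" for e' l'
    proof -
      have e'Q: "e' \<in> Q" and l'L: "l' \<in> states L" and sp: "(\<Sum>s'\<in>S e'. w s' l') > 0"
        using wp by (auto simp: w'_def split: if_splits)
      have "\<not> (\<forall>s'\<in>S e'. w s' l' \<le> 0)"
        using sp sum_nonpos[of "S e'" "\<lambda>s'. w s' l'"] by force
      then obtain s' where s': "s' \<in> S e'" "w s' l' > 0" by auto
      hence s'P: "s' \<in> states P" "(P, s') \<in> e'" by (simp_all add: S_def)
      have "(s', l') \<in> R" using w(4) s'(2) by blast
      hence simx: "sim (P, s') l'" using R(1) by (auto simp: sim_def)
      have "w s' l' \<le> (\<Sum>l''\<in>states L. w s' l'')"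
        using finL l'L w(1) by (intro member_le_sum) auto
      hence "\<mu>p s' > 0" using w(2) s'P(1) s'(2) by simp
      moreover have "\<mu>p (start P) = 0" using PT P(1) P(2) by (auto simp: is_stochastic_tree_def)
      ultimately have nst: "s' \<noteq> start P" by auto
      have e'eq: "e' = cls (P, s')" by (rule cls_eq[OF e'Q s'P(2)])
      have kk: "key (P, s') = F (P, s')" using nst by (simp add: key_def)
      have l'F: "l' \<in> F (P, s')" using simx l'L by (simp add: F_def)
      have "sim y l'" if ye: "y \<in> e'" for y
      proof -
        obtain P' t where y: "y = (P', t)" by (cases y)
        have ySP: "P' \<in> \<P>" "t \<in> states P'" and ky: "key (P', t) = F (P, s')"
          using ye y e'eq kk SP_iff by (auto simp: cls_def)
        show ?thesis
        proof (cases "t = start P'")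
          case True
          hence "V0 = F (P, s')" using ky by (simp add: key_def)
          hence "l' \<in> F (P', start P')" using l'F ySP(1) by (auto simp: V0_def)
          thus ?thesis using y True by (simp add: F_def)
        next
          case False
          hence "F (P', t) = F (P, s')" using ky by (simp add: key_def)
          hence "l' \<in> F (P', t)" using l'F by simp
          thus ?thesis using y by (simp add: F_def)
        qed
      qed
      thus ?thesis using e'Q l'L by (simp add: R2_def)
    qed
    have "lift_rel R2 (states ?Qt) (states L) \<mu> \<mu>2"
      unfolding lift_rel_def stQ
    proof (rule exI[of _ w'], intro conjI allI impI ballI)
      show "0 \<le> w' x y" for x y by (rule wnn)
      show "w' x y \<le> 1" for x y by (rule wle)
      show "(\<Sum>s2\<in>states L. w' s1 s2) = \<mu> s1" if "s1 \<in> Q" for s1 using mm1 that .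
      show "(\<Sum>s1\<in>Q. w' s1 s2) = \<mu>2 s2" if "s2 \<in> states L" for s2 using mm2 that .
      show "(x, y) \<in> R2" if "0 < w' x y" for x y using pos that .
    qed
    thus "\<exists>\<mu>2. (l, a, \<mu>2) \<in> trans L \<and> lift_rel R2 (states ?Qt) (states L) \<mu> \<mu>2"
      using m2(1) by blast
  qed
  have e0L: "(e0, start L) \<in> R2"
  proof -
    have "start L \<in> states L" using LL by (simp add: is_lpts_def)
    moreover have "sim x (start L)" if "x \<in> e0" for x
    proof -
      obtain P t where x: "x = (P, t)" by (cases x)
      have xSP: "P \<in> \<P>" "t \<in> states P" and kx: "key (P, t) = key (P0, start P0)"
        using that x SP_iff by (auto simp: e0_def cls_def)
      have simst: "sim (P', start P') (start L)" if "P' \<in> \<P>" for P'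
        using PsimL[OF that] by (simp add: sim_def simulated_by_def)
      show ?thesis
      proof (cases "t = start P")
        case True thus ?thesis using simst xSP x by simp
      next
        case False
        hence "F (P, t) = V0" using kx by (simp add: key_def)
        moreover have "start L \<in> V0" using simst \<open>start L \<in> states L\<close> by (simp add: V0_def F_def)
        ultimately have "start L \<in> F (P, t)" by simp
        thus ?thesis using x by (simp add: F_def)
      qed
    qed
    ultimately show ?thesis using e0Q by (simp add: R2_def)
  qed
  have QsimL: "?Qt \<preceq>\<^sub>s L" unfolding simulated_by_def
    by (intro exI[of _ R2]) (simp add: simtr e0L startQ)
  have "\<not> N \<preceq>\<^sub>s ?Qt" if "N \<in> \<N>" for N
  proof
    assume "N \<preceq>\<^sub>s ?Qt"
    hence "N \<preceq>\<^sub>s L" using sim_trans[OF _ QsimL Nlpts[OF that]] finQ stQ finL by simp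
    thus False using NnsimL that by blast
  qed
  hence "consistent_partition \<P> \<N> Q" using part sio by (simp add: consistent_partition_def)
  thus ?thesis using cardQ by blast
qed

end
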